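(* Let $X=\{\{k\}:k\in\mathbb{Z}\}\cup\{\{k,k+1\}:k\in\mathbb{Z}\}$ be the infinite $1$-dimensional simplicial complex of the integer line. Consider the operators $L$ and $|H|$ on $\ell^2(X)$, defined in the context. Then $L$ is a bounded operator, it is invertible with bounded inverse $L^{-1}$, and $$|H|=L-L^{-1}.$$
   Context: The operator $L$ on $\ell^2(X)$ is given by the matrix $L(x,y)=1$ if $x\cap y\neq\emptyset$ and $L(x,y)=0$ otherwise, for $x,y\in X$. The sign-less exterior derivative $|d|$ is given by the matrix $|d|(x,y)=1$ if $y\subset x$ and $|x|=|y|+1$, and $0$ otherwise. The operator $|H|$ is defined as $|H|=(|d|+|d|^* )^2$. All matrices have finitely many nonzero entries in each row and column, with uniformly bounded entries. *)

theory Defs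
  imports "HOL-Analysis.Analysis"
begin

definition X :: "int set set" where
  "X = range (\<lambda>k. {k}) \<union> range (\<lambda>k. {k, k + 1})"

type_synonym mat = "int set \<Rightarrow> int set \<Rightarrow> real"

definition Lmat :: mat where
  "Lmat x y = (if x \<inter> y \<noteq> {} then 1 else 0)"

definition absd :: mat where
  "absd x y = (if y \<subset> x \<and> card x = card y + 1 then 1 else 0)"

definition mat_adj :: "mat \<Rightarrow> mat" where
  "mat_adj M x y = M y x"

definition mat_plus :: "mat \<Rightarrow> mat \<Rightarrow> mat" where
  "mat_plus M N x y = M x y + N x y"

text \<open>Matrix product over the index set X (rows/columns are finitely supported).\<close>
definition mat_mult :: "mat \<Rightarrow> mat \<Rightarrow> mat" where
  "mat_mult M N x z = (\<Sum>\<^sub>\<infinity>y\<in>X. M x y * N y z)"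

definition absH :: mat where
  "absH = (let D = mat_plus absd (mat_adj absd) in mat_mult D D)"

definition ell2X :: "(int set \<Rightarrow> real) set" where
  "ell2X = {f. (\<forall>x. x \<notin> X \<longrightarrow> f x = 0) \<and> (\<lambda>x. (f x)\<^sup>2) summable_on X}"

definition ell2_norm :: "(int set \<Rightarrow> real) \<Rightarrow> real" where
  "ell2_norm f = sqrt (\<Sum>\<^sub>\<infinity>x\<in>X. (f x)\<^sup>2)"

definition mat_app :: "mat \<Rightarrow> (int set \<Rightarrow> real) \<Rightarrow> (int set \<Rightarrow> real)" where
  "mat_app M f x = (if x \<in> X then (\<Sum>\<^sub>\<infinity>y\<in>X. M x y * f y) else 0)"

definition bounded_op :: "((int set \<Rightarrow> real) \<Rightarrow> (int set \<Rightarrow> real)) \<Rightarrow> bool" where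
  "bounded_op T \<longleftrightarrow>
     (\<forall>f\<in>ell2X. T f \<in> ell2X) \<and>
     (\<forall>f\<in>ell2X. \<forall>g\<in>ell2X. \<forall>a b. T (\<lambda>x. a * f x + b * g x) = (\<lambda>x. a * T f x + b * T g x)) \<and>
     (\<exists>C. \<forall>f\<in>ell2X. ell2_norm (T f) \<le> C * ell2_norm f)"

end

theory Submission imports Defs begin

definition phi :: "int \<Rightarrow> int set" where
  "phi i = (if even i then {i div 2} else {i div 2, i div 2 + 1})"

lemma phi_even[simp]: "phi (2*a) = {a}" by (simp add: phi_def)
lemma phi_odd[simp]: "phi (2*a+1) = {a, a+1}" by (simp add: phi_def)

lemma card_edge: "card {a::int, a+1} = 2" by simp

lemma phi_inj: "inj phi"
proof (rule injI)
  fix i j assume h: "phi i = phi j"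
  obtain a where a: "i = 2*a \<or> i = 2*a+1" by (metis oddE evenE)
  obtain b where b: "j = 2*b \<or> j = 2*b+1" by (metis oddE evenE)
  from a b h show "i = j"
    by (auto simp: doubleton_eq_iff dest: arg_cong[where f=card] split: if_splits)
qed

lemma X_phi: "X = range phi"
proof
  show "X \<subseteq> range phi"
  proof
    fix x assume "x \<in> X"
    then obtain k where "x = {k} \<or> x = {k,k+1}" by (auto simp: X_def)
    then show "x \<in> range phi" by (metis phi_even phi_odd rangeI)
  qed
  show "range phi \<subseteq> X"
  proof
    fix x assume "x \<in> range phi"
    then obtain i where i: "x = phi i" by auto
    obtain a where "i = 2*a \<or> i = 2*a+1" by (metis oddE evenE)
    then show "x \<in> X" using i by (auto simp: X_def)
  qed
qed

lemma phi_in_X[simp]: "phi i \<in> X" by (simp add: X_phi)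

lemma X_obtain: assumes "x \<in> X" obtains i where "x = phi i"
  using assms X_phi by auto

lemma sum5: "sum g {i-2..i+2::int} = g (i-2) + g (i-1) + g i + g (i+1) + g (i+2)"
proof -
  have "{i-2..i+2} = {i-2, i-1, i, i+1, i+2}" by auto
  then show ?thesis by (simp add: add.assoc)
qed

lemma band_app:
  fixes M :: mat and f :: "int set \<Rightarrow> real"
  assumes "\<And>j. \<bar>i - j\<bar> > 2 \<Longrightarrow> M (phi i) (phi j) = 0"
  shows "(\<Sum>\<^sub>\<infinity>y\<in>X. M (phi i) y * f y) =
     M (phi i) (phi (i-2)) * f (phi (i-2)) + M (phi i) (phi (i-1)) * f (phi (i-1))
   + M (phi i) (phi i) * f (phi i) + M (phi i) (phi (i+1)) * f (phi (i+1))
   + M (phi i) (phi (i+2)) * f (phi (i+2))"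
proof -
  have "(\<Sum>\<^sub>\<infinity>y\<in>X. M (phi i) y * f y) = (\<Sum>\<^sub>\<infinity>j\<in>UNIV. M (phi i) (phi j) * f (phi j))"
    unfolding X_phi by (subst infsum_reindex[OF phi_inj]) (simp add: o_def)
  also have "\<dots> = (\<Sum>\<^sub>\<infinity>j\<in>{i-2..i+2}. M (phi i) (phi j) * f (phi j))"
    by (rule infsum_cong_neutral) (auto simp: assms)
  also have "\<dots> = (\<Sum>j\<in>{i-2..i+2}. M (phi i) (phi j) * f (phi j))" by simp
  finally show ?thesis by (simp add: sum5)
qed

definition Lc :: "int \<Rightarrow> int \<Rightarrow> real" where
  "Lc i j = (if \<bar>i - j\<bar> \<le> 1 \<or> (\<bar>i - j\<bar> = 2 \<and> odd i) then 1 else 0)"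

definition Hc :: "int \<Rightarrow> int \<Rightarrow> real" where
  "Hc i j = (if i = j then 2 else if \<bar>i - j\<bar> = 2 then 1 else 0)"

definition Dm :: mat where "Dm = mat_plus absd (mat_adj absd)"

lemma par_cases: fixes i :: int obtains a where "i = 2*a" | a where "i = 2*a + 1"
  by (metis oddE evenE)

lemma Lmat_phi: "Lmat (phi i) (phi j) = Lc i j"
proof -
  obtain a where a: "i = 2*a \<or> i = 2*a+1" by (metis oddE evenE)
  obtain b where b: "j = 2*b \<or> j = 2*b+1" by (metis oddE evenE)
  from a b show ?thesis
    apply (elim disjE)
    apply (simp_all add: Lmat_def Lc_def)
    apply (auto simp: abs_if)
    done
qed

lemma card_edge2[simp]: "card {a::int, a+1} = 2" by simp
lemma sub1: "({b::int} \<subset> {a, a+1}) = (b = a \<or> b = a+1)" by auto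
lemma sub2: "\<not> ({b::int, b+1} \<subset> {a})" by auto
lemma sub3: "\<not> ({b::int} \<subset> {a})" by auto

lemma absd_phi: "absd (phi i) (phi j) = (if (i = j + 1 \<or> i = j - 1) \<and> odd i then 1 else 0)"
proof -
  obtain a where a: "i = 2*a \<or> i = 2*a+1" by (metis oddE evenE)
  obtain b where b: "j = 2*b \<or> j = 2*b+1" by (metis oddE evenE)
  from a b show ?thesis
    apply (elim disjE)
    apply (simp_all add: absd_def sub1 sub2 sub3 del: insert_subset)
    apply presburger
    done
qed


lemma Dm_phi: "Dm (phi i) (phi j) = (if \<bar>i - j\<bar> = 1 then 1 else 0)"
  by (auto simp: Dm_def mat_plus_def mat_adj_def absd_phi abs_if; presburger)

lemma absH_phi: "absH (phi i) (phi j) = Hc i j"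
proof -
  have "absH (phi i) (phi j) = (\<Sum>\<^sub>\<infinity>y\<in>X. Dm (phi i) y * Dm y (phi j))"
    by (simp add: absH_def Dm_def[symmetric] mat_mult_def)
  also have "\<dots> = Dm (phi i) (phi (i-2)) * Dm (phi (i-2)) (phi j) + Dm (phi i) (phi (i-1)) * Dm (phi (i-1)) (phi j)
   + Dm (phi i) (phi i) * Dm (phi i) (phi j) + Dm (phi i) (phi (i+1)) * Dm (phi (i+1)) (phi j)
   + Dm (phi i) (phi (i+2)) * Dm (phi (i+2)) (phi j)"
    by (rule band_app) (simp add: Dm_phi)
  finally show ?thesis by (auto simp: Dm_phi Hc_def abs_if)
qed


definition LL :: "(int \<Rightarrow> real) \<Rightarrow> int \<Rightarrow> real" where
  "LL F i = (if odd i then F (i-2) else 0) + F (i-1) + F i + F (i+1) + (if odd i then F (i+2) else 0)"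
definition MM :: "(int \<Rightarrow> real) \<Rightarrow> int \<Rightarrow> real" where
  "MM F i = (if odd i then 0 else - F (i-2)) + F (i-1) - F i + F (i+1) + (if odd i then 0 else - F (i+2))"

lemma MM_LL: "MM (LL F) i = F i"
  by (cases "even i") (simp_all add: MM_def LL_def algebra_simps)
lemma LL_MM: "LL (MM F) i = F i"
  by (cases "even i") (simp_all add: MM_def LL_def algebra_simps)


lemma sq5: "(a+b+c+d+e::real)^2 \<le> 5*(a^2+b^2+c^2+d^2+e^2)"
proof -
  have "5*(a^2+b^2+c^2+d^2+e^2) - (a+b+c+d+e)^2 = (a-b)^2+(a-c)^2+(a-d)^2+(a-e)^2+(b-c)^2+(b-d)^2+(b-e)^2+(c-d)^2+(c-e)^2+(d-e)^2"
    by (simp add: power2_eq_square algebra_simps)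
  moreover have "0 \<le> (a-b)^2+(a-c)^2+(a-d)^2+(a-e)^2+(b-c)^2+(b-d)^2+(b-e)^2+(c-d)^2+(c-e)^2+(d-e)^2"
    by simp
  ultimately show ?thesis by linarith
qed

lemma shift_sum:
  fixes G :: "int \<Rightarrow> real"
  assumes "G summable_on UNIV" "inj h" "range h = UNIV"
  shows "(\<lambda>i. G (h i)) summable_on UNIV" "(\<Sum>\<^sub>\<infinity>i. G (h i)) = (\<Sum>\<^sub>\<infinity>i. G i)"
proof -
  show "(\<lambda>i. G (h i)) summable_on UNIV"
    using summable_on_reindex[OF assms(2), of G] assms(1,3) by (simp add: o_def)
  show "(\<Sum>\<^sub>\<infinity>i. G (h i)) = (\<Sum>\<^sub>\<infinity>i. G i)"
    using infsum_reindex[OF assms(2), of G] assms(3) by (simp add: o_def)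
qed

lemma inj_shift: "inj (\<lambda>i::int. i + d)" by (simp add: inj_on_def)
lemma surj_shift: "range (\<lambda>i::int. i + d) = UNIV"
  by (auto intro: image_eqI[where x="_ - d"])

lemma X_reindex:
  fixes g :: "int set \<Rightarrow> real"
  shows "g summable_on X \<longleftrightarrow> (\<lambda>i. g (phi i)) summable_on UNIV"
    "(\<Sum>\<^sub>\<infinity>x\<in>X. g x) = (\<Sum>\<^sub>\<infinity>i. g (phi i))"
  unfolding X_phi
  by (simp_all add: summable_on_reindex[OF phi_inj] infsum_reindex[OF phi_inj] o_def)

lemma bounded_gen:
  assumes van: "\<And>f x. x \<notin> X \<Longrightarrow> T f x = 0"
  and lin: "\<And>f g a b i. T (\<lambda>x. a*f x + b*g x) (phi i) = a * T f (phi i) + b * T g (phi i)"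
  and bnd: "\<And>f i. \<bar>T f (phi i)\<bar> \<le> 2*(\<bar>f(phi(i-2))\<bar> + \<bar>f(phi(i-1))\<bar> + \<bar>f(phi i)\<bar> + \<bar>f(phi(i+1))\<bar> + \<bar>f(phi(i+2))\<bar>)"
  shows "bounded_op T"
proof -
  have linear: "T (\<lambda>x. a * f x + b * g x) = (\<lambda>x. a * T f x + b * T g x)" for f g a b
  proof
    fix x show "T (\<lambda>x. a * f x + b * g x) x = a * T f x + b * T g x"
    proof (cases "x \<in> X")
      case True then obtain i where "x = phi i" by (rule X_obtain)
      then show ?thesis using lin by simp
    next
      case False then show ?thesis using van by simp
    qed
  qed
  have main: "T f \<in> ell2X \<and> ell2_norm (T f) \<le> 10 * ell2_norm f" if f: "f \<in> ell2X" for f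
  proof -
    define G where "G i = (f (phi i))^2" for i
    have sG: "G summable_on UNIV"
      using f X_reindex(1)[of "\<lambda>x. (f x)^2"] unfolding G_def[abs_def] by (simp add: ell2X_def)
    have sh: "(\<lambda>i. G (i + d)) summable_on UNIV" "(\<Sum>\<^sub>\<infinity>i. G (i + d)) = (\<Sum>\<^sub>\<infinity>i. G i)" for d
      using shift_sum[OF sG inj_shift surj_shift] by auto
    have sh': "(\<lambda>i. G (i - d)) summable_on UNIV" "(\<Sum>\<^sub>\<infinity>i. G (i - d)) = (\<Sum>\<^sub>\<infinity>i. G i)" for d
      using sh[of "-d"] by simp_all
    define B where "B i = 20 * (G (i-2) + G (i-1) + G i + G (i+1) + G (i+2))" for i
    have pt: "(T f (phi i))^2 \<le> B i" for i
    proof -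
      let ?S = "\<bar>f(phi(i-2))\<bar> + \<bar>f(phi(i-1))\<bar> + \<bar>f(phi i)\<bar> + \<bar>f(phi(i+1))\<bar> + \<bar>f(phi(i+2))\<bar>"
      have "(T f (phi i))^2 = \<bar>T f (phi i)\<bar>^2" by simp
      also have "\<dots> \<le> (2 * ?S)^2"
        by (rule power_mono[OF bnd]) simp
      also have "\<dots> = 4 * ?S^2" by (simp only: power_mult_distrib) simp
      also have "\<dots> \<le> 4 * (5 * (\<bar>f(phi(i-2))\<bar>^2 + \<bar>f(phi(i-1))\<bar>^2 + \<bar>f(phi i)\<bar>^2 + \<bar>f(phi(i+1))\<bar>^2 + \<bar>f(phi(i+2))\<bar>^2))"
        by (intro mult_left_mono sq5) simp
      also have "\<dots> = B i" by (simp add: B_def G_def)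
      finally show ?thesis .
    qed
    have s5: "(\<lambda>i. G (i-2) + G (i-1) + G i + G (i+1) + G (i+2)) summable_on UNIV"
      by (intro summable_on_add sh sh' sG)
    have sB: "B summable_on UNIV"
      unfolding B_def by (intro summable_on_cmult_right s5)
    have IB: "(\<Sum>\<^sub>\<infinity>i. B i) = 100 * (\<Sum>\<^sub>\<infinity>i. G i)"
    proof -
      have "(\<Sum>\<^sub>\<infinity>i. B i) = 20 * (\<Sum>\<^sub>\<infinity>i. G (i-2) + G (i-1) + G i + G (i+1) + G (i+2))"
        unfolding B_def by (rule infsum_cmult_right) (rule s5)
      also have "(\<Sum>\<^sub>\<infinity>i. G (i-2) + G (i-1) + G i + G (i+1) + G (i+2)) =
          (\<Sum>\<^sub>\<infinity>i. G (i-2)) + (\<Sum>\<^sub>\<infinity>i. G (i-1)) + (\<Sum>\<^sub>\<infinity>i. G i) + (\<Sum>\<^sub>\<infinity>i. G (i+1)) + (\<Sum>\<^sub>\<infinity>i. G (i+2))"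
        by (subst infsum_add; (intro summable_on_add sh sh' sG)?)+ simp
      finally show ?thesis using sh(2) sh'(2) by simp
    qed
    have sT: "(\<lambda>i. (T f (phi i))^2) summable_on UNIV"
      by (rule summable_on_comparison_test[OF sB]) (use pt in auto)
    have inX: "T f \<in> ell2X"
      using sT X_reindex(1)[of "\<lambda>x. (T f x)^2"] van by (simp add: ell2X_def)
    have "(\<Sum>\<^sub>\<infinity>x\<in>X. (T f x)^2) = (\<Sum>\<^sub>\<infinity>i. (T f (phi i))^2)" by (rule X_reindex(2))
    also have "\<dots> \<le> (\<Sum>\<^sub>\<infinity>i. B i)" by (rule infsum_mono[OF sT sB pt])
    also have "\<dots> = 100 * (\<Sum>\<^sub>\<infinity>x\<in>X. (f x)^2)" using IB X_reindex(2)[of "\<lambda>x. (f x)^2"] by (simp add: G_def)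
    finally have le: "(\<Sum>\<^sub>\<infinity>x\<in>X. (T f x)^2) \<le> 100 * (\<Sum>\<^sub>\<infinity>x\<in>X. (f x)^2)" .
    have "ell2_norm (T f) \<le> sqrt (100 * (\<Sum>\<^sub>\<infinity>x\<in>X. (f x)^2))"
      unfolding ell2_norm_def using le by simp
    also have "\<dots> = 10 * ell2_norm f"
      by (simp add: ell2_norm_def real_sqrt_mult)
    finally show ?thesis using inX by simp
  qed
  show ?thesis unfolding bounded_op_def using main linear by blast
qed


lemma abs5: "\<bar>a+b+c+d+e::real\<bar> \<le> \<bar>a\<bar>+\<bar>b\<bar>+\<bar>c\<bar>+\<bar>d\<bar>+\<bar>e\<bar>"
  by (smt (verit, best) abs_triangle_ineq)

lemma L_app: "mat_app Lmat f (phi i) = LL (\<lambda>j. f (phi j)) i"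
proof -
  have "mat_app Lmat f (phi i) = Lmat (phi i) (phi (i-2)) * f (phi (i-2)) + Lmat (phi i) (phi (i-1)) * f (phi (i-1))
   + Lmat (phi i) (phi i) * f (phi i) + Lmat (phi i) (phi (i+1)) * f (phi (i+1))
   + Lmat (phi i) (phi (i+2)) * f (phi (i+2))"
    unfolding mat_app_def by (simp only: phi_in_X if_True) (rule band_app, simp add: Lmat_phi Lc_def)
  then show ?thesis by (simp add: Lmat_phi Lc_def LL_def)
qed

lemma H_app: "mat_app absH f (phi i) = f (phi (i-2)) + 2 * f (phi i) + f (phi (i+2))"
proof -
  have "mat_app absH f (phi i) = absH (phi i) (phi (i-2)) * f (phi (i-2)) + absH (phi i) (phi (i-1)) * f (phi (i-1))
   + absH (phi i) (phi i) * f (phi i) + absH (phi i) (phi (i+1)) * f (phi (i+1))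
   + absH (phi i) (phi (i+2)) * f (phi (i+2))"
    unfolding mat_app_def by (simp only: phi_in_X if_True) (rule band_app, simp add: absH_phi Hc_def)
  then show ?thesis by (simp add: absH_phi Hc_def)
qed

lemma Linv_app: "mat_app Lmat f (phi i) - mat_app absH f (phi i) = MM (\<lambda>j. f (phi j)) i"
  by (simp add: L_app H_app LL_def MM_def)

lemma LL_comp: "(\<lambda>j. mat_app Lmat f (phi j)) = LL (\<lambda>j. f (phi j))"
  using L_app by auto
lemma MM_comp: "(\<lambda>j. mat_app Lmat f (phi j) - mat_app absH f (phi j)) = MM (\<lambda>j. f (phi j))"
  using Linv_app by auto

theorem mainTheorem8:
  shows "bounded_op (mat_app Lmat) \<and>
    (\<exists>Linv. bounded_op Linv \<and>
       (\<forall>f\<in>ell2X. Linv (mat_app Lmat f) = f \<and> mat_app Lmat (Linv f) = f) \<and>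
       (\<forall>f\<in>ell2X. mat_app absH f = (\<lambda>x. mat_app Lmat f x - Linv f x)))"
proof -
  define Li where "Li f x = mat_app Lmat f x - mat_app absH f x" for f x
  have b1: "bounded_op (mat_app Lmat)"
  proof (rule bounded_gen)
    show "mat_app Lmat f x = 0" if "x \<notin> X" for f x using that by (simp add: mat_app_def)
    show "mat_app Lmat (\<lambda>x. a * f x + b * g x) (phi i) = a * mat_app Lmat f (phi i) + b * mat_app Lmat g (phi i)" for f g a b i
      by (simp add: L_app LL_def algebra_simps)
    show "\<bar>mat_app Lmat f (phi i)\<bar> \<le> 2*(\<bar>f(phi(i-2))\<bar> + \<bar>f(phi(i-1))\<bar> + \<bar>f(phi i)\<bar> + \<bar>f(phi(i+1))\<bar> + \<bar>f(phi(i+2))\<bar>)" for f i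
      using abs5[of "if odd i then f(phi(i-2)) else 0" "f(phi(i-1))" "f(phi i)" "f(phi(i+1))" "if odd i then f(phi(i+2)) else 0"]
      by (cases "even i"; simp add: L_app LL_def; smt (verit))
  qed
  have b2: "bounded_op Li"
  proof (rule bounded_gen)
    show "Li f x = 0" if "x \<notin> X" for f x using that by (simp add: Li_def mat_app_def)
    show "Li (\<lambda>x. a * f x + b * g x) (phi i) = a * Li f (phi i) + b * Li g (phi i)" for f g a b i
      by (simp add: Li_def Linv_app MM_def algebra_simps)
    show "\<bar>Li f (phi i)\<bar> \<le> 2*(\<bar>f(phi(i-2))\<bar> + \<bar>f(phi(i-1))\<bar> + \<bar>f(phi i)\<bar> + \<bar>f(phi(i+1))\<bar> + \<bar>f(phi(i+2))\<bar>)" for f i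
      using abs5[of "if odd i then 0 else - f(phi(i-2))" "f(phi(i-1))" "- f(phi i)" "f(phi(i+1))" "if odd i then 0 else - f(phi(i+2))"]
      by (cases "even i"; simp add: Li_def Linv_app MM_def; smt (verit))
  qed
  have inv: "Li (mat_app Lmat f) = f \<and> mat_app Lmat (Li f) = f" if f: "f \<in> ell2X" for f
  proof (intro conjI ext)
    fix x
    show "Li (mat_app Lmat f) x = f x"
    proof (cases "x \<in> X")
      case True then obtain i where "x = phi i" by (rule X_obtain)
      then show ?thesis by (simp add: Li_def Linv_app LL_comp MM_LL)
    next
      case False then show ?thesis using f by (simp add: Li_def mat_app_def ell2X_def)
    qed
    show "mat_app Lmat (Li f) x = f x"
    proof (cases "x \<in> X")
      case True then obtain i where "x = phi i" by (rule X_obtain)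
      moreover have "(\<lambda>j. Li f (phi j)) = MM (\<lambda>j. f (phi j))" by (simp only: Li_def MM_comp)
      ultimately show ?thesis by (simp only: L_app LL_MM)
    next
      case False then show ?thesis using f by (simp add: mat_app_def ell2X_def)
    qed
  qed
  have "mat_app absH f = (\<lambda>x. mat_app Lmat f x - Li f x)" for f
    by (simp add: Li_def)
  then show ?thesis using b1 b2 inv by blast
qed

end
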